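(* Assume the well-posedness, controllability, common optimal equilibrium and strict stochastic dissipativity assumptions below, and suppose moreover that there is $\gamma>0$ with $\rho(x,i)\ge\gamma\|x-x_s\|^2$ for all $x\in\mathbb{R}^n$ and $i\in\mathcal{N}$. Then the EMPC-controlled system $x_{k+1}=f(x_k,\kappa_N(x_k,\theta_k),\theta_k)$ is mean square stable: $\mathbb{E}[\|x_k\|^2]\to0$ as $k\to\infty$ for all initial conditions $(x_0,\theta_0)$ in the feasibility domain $X_N$.
   Context: Setting: $\mathcal{N}=\{1,\dots,\nu\}$; $\{\theta_k\}$ a time-homogeneous Markov chain on $\mathcal{N}$ with transition matrix $P=(p_{ij})$ on a filtered probability space $(\Omega,\mathfrak{F},\{\mathfrak{F}_k\},\mathbb{P})$, $\mathfrak{F}_k$ generated by the history up to time $k$; system $x_{k+1}=f(x_k,u_k,\theta_k)$ with $x_k,\theta_k$ measured at time $k$; constraints $(x_k,u_k)\in Y_{\theta_k}$; stage cost $\ell$. $u\lhd\mathfrak{F}_k$ means $\mathfrak{F}_k$-measurable. Cover $\mathcal{C}(i)=\{j:p_{ij}>0\}$; bet node $\mathrm{bet}(i)\in\mathcal{C}(i)$ maximizing $p_{ij}$ over $j\in\mathcal{C}(i)$. Well-posedness: each $\ell(\cdot,\cdot,\theta)$ nonnegative, lower semicontinuous, level-bounded in $u$ locally uniformly in $x$; $f(\cdot,\cdot,\theta)$ continuous; $Y_\theta$ nonempty compact; chain irreducible and aperiodic. Optimal steady states $(x_s^\theta,u_s^\theta)$ minimize $\ell(x,u,\theta)$ s.t.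 $f(x,u,\theta)=x$, $(x,u)\in Y_\theta$. Controllability: for all $i,j$ there is $\bar u_s^{i,j}$ with $(x_s^i,\bar u_s^{i,j})\in Y_j$, $f(x_s^i,\bar u_s^{i,j},j)=x_s^{\mathrm{bet}(j)}$. Common optimal equilibrium: one optimal steady state $(x_s,u_s)=(0,0)$ common to all modes, with optimal steady-state cost $\ell_s$. Strict stochastic dissipativity: there are $\lambda:\mathbb{R}^n\times\mathcal{N}\to\mathbb{R}$, lower semicontinuous in the first argument, with $\lambda(x_s,\theta)=\lambda_s$ independent of $\theta$, and a convex $\rho:\mathbb{R}^n\times\mathcal{N}\to\mathbb{R}_+$ positive definite w.r.t. $x_s$, such that $\mathbb{E}[\lambda(x_{k+1},\theta_{k+1})-\lambda(x_k,\theta_k)\mid\mathfrak{F}_k]\le\ell(x_k,u_k,\theta_k)-\ell_s-\rho(x_k,\theta_k)$ for all states, inputs and modes, where $x_{k+1}=f(x_k,u_k,\theta_k)$. EMPC problem $\mathbb{P}(x,\theta)$: minimize $\mathbb{E}[\sum_{j=0}^{N-1}\ell(x_j,u_j,\theta_j)\mid\mathfrak{F}_0]$ subject to $x_{k+1}=f(x_k,u_k,\theta_k)$, $(x_k,u_k)\in Y_{\theta_k}$, $(x_0,\theta_0)=(x,\theta)$, $x_N=x_s^{\mathrm{bet}(\theta_{N-1})}$, $u_k\lhd\mathfrak{F}_k$; $X_N$ is its feasibility domain and $\kappa_N$ the first element of an optimal policy. *)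

theory Defs
  imports "HOL-Analysis.Analysis"
begin

definition lsc :: "('a::topological_space \<Rightarrow> real) \<Rightarrow> bool" where
  "lsc g \<longleftrightarrow> (\<forall>x a. a < g x \<longrightarrow> eventually (\<lambda>y. a < g y) (nhds x))"

definition level_bounded_loc_unif :: "('a::topological_space \<Rightarrow> 'b::metric_space \<Rightarrow> real) \<Rightarrow> bool" where
  "level_bounded_loc_unif g \<longleftrightarrow>
     (\<forall>x0 \<alpha>. \<exists>V. open V \<and> x0 \<in> V \<and> bounded {u. \<exists>x\<in>V. g x u \<le> \<alpha>})"

definition stochastic_matrix :: "('q::finite \<Rightarrow> 'q \<Rightarrow> real) \<Rightarrow> bool" where
  "stochastic_matrix p \<longleftrightarrow> (\<forall>i j. 0 \<le> p i j) \<and> (\<forall>i. (\<Sum>j\<in>UNIV. p i j) = 1)"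

fun mpow :: "('q::finite \<Rightarrow> 'q \<Rightarrow> real) \<Rightarrow> nat \<Rightarrow> 'q \<Rightarrow> 'q \<Rightarrow> real" where
  "mpow p 0 i j = (if i = j then 1 else 0)"
| "mpow p (Suc k) i j = (\<Sum>l\<in>UNIV. mpow p k i l * p l j)"

definition irreducible_chain :: "('q::finite \<Rightarrow> 'q \<Rightarrow> real) \<Rightarrow> bool" where
  "irreducible_chain p \<longleftrightarrow> (\<forall>i j. \<exists>k>0. mpow p k i j > 0)"

definition aperiodic_chain :: "('q::finite \<Rightarrow> 'q \<Rightarrow> real) \<Rightarrow> bool" where
  "aperiodic_chain p \<longleftrightarrow> (\<forall>i. Gcd {k::nat. k > 0 \<and> mpow p k i i > 0} = 1)"

definition cover :: "('q \<Rightarrow> 'q \<Rightarrow> real) \<Rightarrow> 'q \<Rightarrow> 'q set" where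
  "cover p i = {j. p i j > 0}"

definition is_bet :: "('q \<Rightarrow> 'q \<Rightarrow> real) \<Rightarrow> ('q \<Rightarrow> 'q) \<Rightarrow> bool" where
  "is_bet p bet \<longleftrightarrow> (\<forall>i. bet i \<in> cover p i \<and> (\<forall>j\<in>cover p i. p i j \<le> p i (bet i)))"

definition opt_steady_state ::
  "('x \<Rightarrow> 'u \<Rightarrow> 'q \<Rightarrow> 'x) \<Rightarrow> ('x \<Rightarrow> 'u \<Rightarrow> 'q \<Rightarrow> real) \<Rightarrow> ('q \<Rightarrow> ('x \<times> 'u) set)
     \<Rightarrow> 'q \<Rightarrow> 'x \<Rightarrow> 'u \<Rightarrow> bool" where
  "opt_steady_state f l Y \<theta> xs us \<longleftrightarrow>
     f xs us \<theta> = xs \<and> (xs, us) \<in> Y \<theta> \<and>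
     (\<forall>x u. f x u \<theta> = x \<and> (x, u) \<in> Y \<theta> \<longrightarrow> l xs us \<theta> \<le> l x u \<theta>)"

(* Since x_0 is given and
   x_k is a function of x_0 and \<theta>_0..\<theta>_{k-1}, the \<sigma>-algebra F_k is generated by the
   history \<theta>_0..\<theta>_k; an F_k-measurable input u_k is thus a function of that history.
   A policy is therefore a map \<pi> from histories (lists [\<theta>_0,...,\<theta>_k]) to inputs. *)
definition histories :: "'q::finite \<Rightarrow> nat \<Rightarrow> 'q list set" where
  "histories \<theta> n = {h. length h = n \<and> h \<noteq> [] \<and> hd h = \<theta>}"

definition hist_prob :: "('q \<Rightarrow> 'q \<Rightarrow> real) \<Rightarrow> 'q list \<Rightarrow> real" where
  "hist_prob p h = (\<Prod>t<length h - 1. p (h ! t) (h ! Suc t))"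

fun traj :: "('x \<Rightarrow> 'u \<Rightarrow> 'q \<Rightarrow> 'x) \<Rightarrow> 'x \<Rightarrow> ('q list \<Rightarrow> 'u) \<Rightarrow> 'q list \<Rightarrow> nat \<Rightarrow> 'x" where
  "traj f x \<pi> h 0 = x"
| "traj f x \<pi> h (Suc k) = f (traj f x \<pi> h k) (\<pi> (take (Suc k) h)) (h ! k)"

(* feasibility of a policy for problem P(x,\<theta>) with horizon N: constraints hold
   almost surely, i.e. along every history of positive probability *)
definition empc_feasible ::
  "('q::finite \<Rightarrow> 'q \<Rightarrow> real) \<Rightarrow> ('x \<Rightarrow> 'u \<Rightarrow> 'q \<Rightarrow> 'x) \<Rightarrow> ('q \<Rightarrow> ('x \<times> 'u) set)
    \<Rightarrow> ('q \<Rightarrow> 'x) \<Rightarrow> ('q \<Rightarrow> 'q) \<Rightarrow> nat \<Rightarrow> 'x \<Rightarrow> 'q \<Rightarrow> ('q list \<Rightarrow> 'u) \<Rightarrow> bool" where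
  "empc_feasible p f Y xs bet N x \<theta> \<pi> \<longleftrightarrow>
     (\<forall>h\<in>histories \<theta> N. hist_prob p h > 0 \<longrightarrow>
        (\<forall>k<N. (traj f x \<pi> h k, \<pi> (take (Suc k) h)) \<in> Y (h ! k)) \<and>
        traj f x \<pi> h N = xs (bet (h ! (N - 1))))"

definition empc_cost ::
  "('q::finite \<Rightarrow> 'q \<Rightarrow> real) \<Rightarrow> ('x \<Rightarrow> 'u \<Rightarrow> 'q \<Rightarrow> 'x) \<Rightarrow> ('x \<Rightarrow> 'u \<Rightarrow> 'q \<Rightarrow> real)
    \<Rightarrow> nat \<Rightarrow> 'x \<Rightarrow> 'q \<Rightarrow> ('q list \<Rightarrow> 'u) \<Rightarrow> real" where
  "empc_cost p f l N x \<theta> \<pi> =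
     (\<Sum>h\<in>histories \<theta> N. hist_prob p h *
        (\<Sum>k<N. l (traj f x \<pi> h k) (\<pi> (take (Suc k) h)) (h ! k)))"

definition empc_optimal ::
  "('q::finite \<Rightarrow> 'q \<Rightarrow> real) \<Rightarrow> ('x \<Rightarrow> 'u \<Rightarrow> 'q \<Rightarrow> 'x) \<Rightarrow> ('x \<Rightarrow> 'u \<Rightarrow> 'q \<Rightarrow> real)
    \<Rightarrow> ('q \<Rightarrow> ('x \<times> 'u) set) \<Rightarrow> ('q \<Rightarrow> 'x) \<Rightarrow> ('q \<Rightarrow> 'q) \<Rightarrow> nat \<Rightarrow> 'x \<Rightarrow> 'q
    \<Rightarrow> ('q list \<Rightarrow> 'u) \<Rightarrow> bool" where
  "empc_optimal p f l Y xs bet N x \<theta> \<pi> \<longleftrightarrow>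
     empc_feasible p f Y xs bet N x \<theta> \<pi> \<and>
     (\<forall>\<pi>'. empc_feasible p f Y xs bet N x \<theta> \<pi>' \<longrightarrow>
        empc_cost p f l N x \<theta> \<pi> \<le> empc_cost p f l N x \<theta> \<pi>')"

definition empc_domain ::
  "('q::finite \<Rightarrow> 'q \<Rightarrow> real) \<Rightarrow> ('x \<Rightarrow> 'u \<Rightarrow> 'q \<Rightarrow> 'x) \<Rightarrow> ('q \<Rightarrow> ('x \<times> 'u) set)
    \<Rightarrow> ('q \<Rightarrow> 'x) \<Rightarrow> ('q \<Rightarrow> 'q) \<Rightarrow> nat \<Rightarrow> ('x \<times> 'q) set" where
  "empc_domain p f Y xs bet N = {(x, \<theta>). \<exists>\<pi>. empc_feasible p f Y xs bet N x \<theta> \<pi>}"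

fun cl_traj :: "('x \<Rightarrow> 'u \<Rightarrow> 'q \<Rightarrow> 'x) \<Rightarrow> ('x \<Rightarrow> 'q \<Rightarrow> 'u) \<Rightarrow> 'x \<Rightarrow> 'q list \<Rightarrow> nat \<Rightarrow> 'x" where
  "cl_traj f \<kappa> x h 0 = x"
| "cl_traj f \<kappa> x h (Suc k) =
     f (cl_traj f \<kappa> x h k) (\<kappa> (cl_traj f \<kappa> x h k) (h ! k)) (h ! k)"

definition cl_mean_square ::
  "('q::finite \<Rightarrow> 'q \<Rightarrow> real) \<Rightarrow> ('x::real_normed_vector \<Rightarrow> 'u \<Rightarrow> 'q \<Rightarrow> 'x)
    \<Rightarrow> ('x \<Rightarrow> 'q \<Rightarrow> 'u) \<Rightarrow> 'x \<Rightarrow> 'q \<Rightarrow> nat \<Rightarrow> real" where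
  "cl_mean_square p f \<kappa> x0 \<theta>0 k =
     (\<Sum>h\<in>histories \<theta>0 (Suc k). hist_prob p h * (norm (cl_traj f \<kappa> x0 h k))\<^sup>2)"

end

theory Submission
  imports Defs
begin

lemma finite_histories: "finite (histories (\<theta>::'q::finite) n)"
proof (rule finite_subset)
  show "histories \<theta> n \<subseteq> {xs. set xs \<subseteq> (UNIV::'q set) \<and> length xs = n}"
    unfolding histories_def by blast
  show "finite {xs. set xs \<subseteq> (UNIV::'q set) \<and> length xs = n}"
    by (rule finite_lists_length_eq) simp
qed


lemma histories_1: "histories \<theta> (Suc 0) = {[\<theta>]}"
  by (auto simp: histories_def length_Suc_conv)

lemma histories_SS: "histories \<theta> (Suc (Suc n)) = Cons \<theta> ` {h. length h = Suc n}"
  by (auto simp: histories_def length_Suc_conv)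

lemma UN_hist: "{h. length h = Suc n} = (\<Union>j. histories (j::'q::finite) (Suc n))"
  by (auto simp: histories_def length_Suc_conv)

lemma sum_hist_SS:
  "(\<Sum>h\<in>histories (\<theta>::'q::finite) (Suc (Suc n)). F h) = (\<Sum>j\<in>UNIV. \<Sum>h\<in>histories j (Suc n). F (\<theta> # h))"
proof -
  have "(\<Sum>h\<in>histories \<theta> (Suc (Suc n)). F h) = (\<Sum>h\<in>{h. length h = Suc n}. F (\<theta> # h))"
    unfolding histories_SS by (subst sum.reindex) auto
  also have "\<dots> = (\<Sum>h\<in>(\<Union>j. histories (j::'q) (Suc n)). F (\<theta> # h))" by (simp only: UN_hist)
  also have "\<dots> = (\<Sum>j\<in>UNIV. \<Sum>h\<in>histories j (Suc n). F (\<theta> # h))"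
    apply (rule sum.UNION_disjoint)
    apply (simp_all add: finite_histories)
    apply (auto simp: histories_def)
    done
  finally show ?thesis .
qed

lemma hp_Cons: "h \<noteq> [] \<Longrightarrow> hist_prob p (\<theta>#h) = p \<theta> (hd h) * hist_prob p h"
proof -
  assume "h \<noteq> []"
  then obtain n where n: "length h = Suc n" by (cases h) auto
  have "hist_prob p (\<theta>#h) = (\<Prod>t<Suc n. p ((\<theta>#h) ! t) ((\<theta>#h) ! Suc t))"
    by (simp add: hist_prob_def n)
  also have "\<dots> = p \<theta> (h!0) * (\<Prod>t<n. p (h ! t) (h ! Suc t))"
    by (subst prod.lessThan_Suc_shift) simp
  also have "\<dots> = p \<theta> (hd h) * hist_prob p h"
    using \<open>h \<noteq> []\<close> by (simp add: hist_prob_def n hd_conv_nth)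
  finally show ?thesis .
qed

lemma hp_Cons_hist: "h \<in> histories j (Suc n) \<Longrightarrow> hist_prob p (\<theta>#h) = p \<theta> j * hist_prob p h"
  by (subst hp_Cons) (auto simp: histories_def)

lemma hp_single[simp]: "hist_prob p [\<theta>] = 1" by (simp add: hist_prob_def)

lemma hp_nonneg: "stochastic_matrix p \<Longrightarrow> 0 \<le> hist_prob p h"
  unfolding hist_prob_def stochastic_matrix_def by (auto intro: prod_nonneg)

lemma sum_hp: "stochastic_matrix p \<Longrightarrow> (\<Sum>h\<in>histories \<theta> (Suc n). hist_prob p h) = 1"
proof (induction n arbitrary: \<theta>)
  case 0 thus ?case by (simp add: histories_1)
next
  case (Suc n)
  have "(\<Sum>h\<in>histories \<theta> (Suc (Suc n)). hist_prob p h)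
        = (\<Sum>j\<in>UNIV. \<Sum>h\<in>histories j (Suc n). p \<theta> j * hist_prob p h)"
    unfolding sum_hist_SS by (intro sum.cong refl) (simp add: hp_Cons_hist)
  also have "\<dots> = (\<Sum>j\<in>UNIV. p \<theta> j)" by (simp add: sum_distrib_left[symmetric] Suc)
  also have "\<dots> = 1" using Suc.prems by (simp add: stochastic_matrix_def)
  finally show ?case .
qed

lemma sum_hist_SS_hp:
  "(\<Sum>h\<in>histories (\<theta>::'q::finite) (Suc (Suc n)). hist_prob p h * F h)
   = (\<Sum>j\<in>UNIV. p \<theta> j * (\<Sum>h\<in>histories j (Suc n). hist_prob p h * F (\<theta> # h)))"
  unfolding sum_hist_SS
  apply (rule sum.cong[OF refl])
  apply (subst sum_distrib_left)
  apply (rule sum.cong[OF refl])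
  apply (simp add: hp_Cons_hist)
  done

lemma marg:
  assumes "stochastic_matrix p"
  shows "(\<Sum>h\<in>histories \<theta> (Suc (Suc n)). hist_prob p h * G (take (Suc n) h))
       = (\<Sum>h\<in>histories \<theta> (Suc n). hist_prob p h * G h)"
proof (induction n arbitrary: \<theta> G)
  case 0
  have "(\<Sum>h\<in>histories \<theta> (Suc (Suc 0)). hist_prob p h * G (take (Suc 0) h))
     = (\<Sum>j\<in>UNIV. p \<theta> j * G [\<theta>])"
    unfolding sum_hist_SS_hp by (simp add: histories_1)
  also have "\<dots> = G [\<theta>]" using assms by (simp add: stochastic_matrix_def sum_distrib_right[symmetric])
  finally show ?case by (simp add: histories_1)
next
  case (Suc n)
  have "(\<Sum>h\<in>histories \<theta> (Suc (Suc (Suc n))). hist_prob p h * G (take (Suc (Suc n)) h))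
     = (\<Sum>j\<in>UNIV. p \<theta> j * (\<Sum>h\<in>histories j (Suc (Suc n)). hist_prob p h * G (\<theta> # take (Suc n) h)))"
    by (subst sum_hist_SS_hp) simp
  also have "\<dots> = (\<Sum>j\<in>UNIV. p \<theta> j * (\<Sum>h\<in>histories j (Suc n). hist_prob p h * G (\<theta> # h)))"
  proof -
    have "\<And>j. (\<Sum>h\<in>histories j (Suc (Suc n)). hist_prob p h * G (\<theta> # take (Suc n) h))
       = (\<Sum>h\<in>histories j (Suc n). hist_prob p h * G (\<theta> # h))"
      by (rule Suc.IH[where G="\<lambda>h. G (\<theta> # h)"])
    thus ?thesis by simp
  qed
  also have "\<dots> = (\<Sum>h\<in>histories \<theta> (Suc (Suc n)). hist_prob p h * G h)"
    by (subst sum_hist_SS_hp) simp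
  finally show ?case .
qed

lemma hp_pos_iff:
  assumes "stochastic_matrix p"
  shows "hist_prob p h > 0 \<longleftrightarrow> (\<forall>t<length h - 1. p (h!t) (h!Suc t) > 0)"
proof
  assume "hist_prob p h > 0"
  hence "hist_prob p h \<noteq> 0" by simp
  hence "\<forall>t<length h - 1. p (h!t) (h!Suc t) \<noteq> 0" unfolding hist_prob_def by simp
  thus "\<forall>t<length h - 1. p (h!t) (h!Suc t) > 0"
    using assms unfolding stochastic_matrix_def by (metis less_eq_real_def)
next
  assume "\<forall>t<length h - 1. p (h!t) (h!Suc t) > 0"
  thus "hist_prob p h > 0" unfolding hist_prob_def by (auto intro: prod_pos)
qed

lemma hp_take_pos:
  assumes "stochastic_matrix p" "hist_prob p h > 0"
  shows "hist_prob p (take n h) > 0"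
  using assms by (auto simp: hp_pos_iff)


fun W :: "('q::finite \<Rightarrow> 'q \<Rightarrow> real) \<Rightarrow> ('x \<Rightarrow> 'u \<Rightarrow> 'q \<Rightarrow> 'x) \<Rightarrow> ('x \<Rightarrow> 'q \<Rightarrow> 'u)
   \<Rightarrow> nat \<Rightarrow> ('x \<Rightarrow> 'q \<Rightarrow> real) \<Rightarrow> 'x \<Rightarrow> 'q \<Rightarrow> real" where
  "W p f \<kappa> 0 g x \<theta> = g x \<theta>"
| "W p f \<kappa> (Suc k) g x \<theta> = (\<Sum>j\<in>UNIV. p \<theta> j * W p f \<kappa> k g (f x (\<kappa> x \<theta>) \<theta>) j)"

lemma cl_traj_Cons: "cl_traj f \<kappa> x (\<theta>#h) (Suc k) = cl_traj f \<kappa> (f x (\<kappa> x \<theta>) \<theta>) h k"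
  by (induction k) auto

lemma cl_W:
  "(\<Sum>h\<in>histories \<theta> (Suc k). hist_prob p h * g (cl_traj f \<kappa> x h k) (h!k)) = W p f \<kappa> k g x \<theta>"
proof (induction k arbitrary: x \<theta>)
  case 0 thus ?case by (simp add: histories_1)
next
  case (Suc k)
  show ?case
    by (subst sum_hist_SS_hp) (simp add: cl_traj_Cons Suc.IH del: cl_traj.simps)
qed

lemma W_Suc': "W p f \<kappa> (Suc k) g x \<theta> = W p f \<kappa> k (W p f \<kappa> (Suc 0) g) x \<theta>"
proof (induction k arbitrary: x \<theta>)
  case 0 thus ?case by simp
next
  case (Suc k)
  have "W p f \<kappa> (Suc (Suc k)) g x \<theta> = (\<Sum>j\<in>UNIV. p \<theta> j * W p f \<kappa> (Suc k) g (f x (\<kappa> x \<theta>) \<theta>) j)"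
    by (rule W.simps(2))
  also have "\<dots> = (\<Sum>j\<in>UNIV. p \<theta> j * W p f \<kappa> k (W p f \<kappa> (Suc 0) g) (f x (\<kappa> x \<theta>) \<theta>) j)"
    by (simp only: Suc.IH)
  also have "\<dots> = W p f \<kappa> (Suc k) (W p f \<kappa> (Suc 0) g) x \<theta>"
    by (rule W.simps(2)[symmetric])
  finally show ?case .
qed

lemma W_mono:
  assumes sm: "stochastic_matrix p"
    and inv: "\<And>x \<theta> j. (x,\<theta>)\<in>S \<Longrightarrow> p \<theta> j > 0 \<Longrightarrow> (f x (\<kappa> x \<theta>) \<theta>, j) \<in> S"
    and le: "\<And>x \<theta>. (x,\<theta>)\<in>S \<Longrightarrow> g x \<theta> \<le> g' x \<theta>"
  shows "(x,\<theta>)\<in>S \<Longrightarrow> W p f \<kappa> k g x \<theta> \<le> W p f \<kappa> k g' x \<theta>"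
proof (induction k arbitrary: x \<theta>)
  case 0 thus ?case using le by simp
next
  case (Suc k)
  show ?case unfolding W.simps
  proof (rule sum_mono)
    fix j :: 'a
    have "0 \<le> p \<theta> j" using sm by (simp add: stochastic_matrix_def)
    show "p \<theta> j * W p f \<kappa> k g (f x (\<kappa> x \<theta>) \<theta>) j \<le> p \<theta> j * W p f \<kappa> k g' (f x (\<kappa> x \<theta>) \<theta>) j"
    proof (cases "p \<theta> j = 0")
      case False
      hence "p \<theta> j > 0" using \<open>0 \<le> p \<theta> j\<close> by simp
      thus ?thesis using Suc inv by (intro mult_left_mono) auto
    qed simp
  qed
qed

lemma W_add: "W p f \<kappa> k (\<lambda>x \<theta>. g x \<theta> + g' x \<theta>) x \<theta> = W p f \<kappa> k g x \<theta> + W p f \<kappa> k g' x \<theta>"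
  by (induction k arbitrary: x \<theta>) (simp_all add: distrib_left sum.distrib)

lemma W_diff: "W p f \<kappa> k (\<lambda>x \<theta>. g x \<theta> - g' x \<theta>) x \<theta> = W p f \<kappa> k g x \<theta> - W p f \<kappa> k g' x \<theta>"
  by (induction k arbitrary: x \<theta>) (simp_all add: right_diff_distrib sum_subtractf)

lemma W_scale: "W p f \<kappa> k (\<lambda>x \<theta>. c * g x \<theta>) x \<theta> = c * W p f \<kappa> k g x \<theta>"
  by (induction k arbitrary: x \<theta>) (simp_all add: sum_distrib_left mult.left_commute)

lemma W_const: "stochastic_matrix p \<Longrightarrow> W p f \<kappa> k (\<lambda>_ _. c) x \<theta> = c"
  by (induction k arbitrary: x \<theta>) (simp_all add: stochastic_matrix_def sum_distrib_right[symmetric])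

lemma traj_take: "k \<le> m \<Longrightarrow> traj f x \<pi> (take m h) k = traj f x \<pi> h k"
  by (induction k) (auto simp: min_def)

lemma traj_shift:
  "k < N \<Longrightarrow> traj f (f x (\<pi> [\<theta>]) \<theta>) (\<lambda>h'. if length h' < N then \<pi> (\<theta>#h') else u0) h' k
          = traj f x \<pi> (\<theta>#h') (Suc k)"
  by (induction k) auto


definition Acost where
  "Acost f l x \<pi> M h = (\<Sum>k<M. l (traj f x \<pi> h (Suc k)) (\<pi> (take (Suc (Suc k)) h)) (h ! Suc k))"

lemma Acost_take: "Acost f l x \<pi> M (take (Suc M) h) = Acost f l x \<pi> M h"
  unfolding Acost_def
  by (intro sum.cong refl) (auto simp: traj_take min_def)

lemma shift_last:
  assumes sm: "stochastic_matrix p" and z: "\<And>\<theta>. xs \<theta> = z"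
   and NM: "N = Suc M" and feas: "empc_feasible p f Y xs bet N x \<theta> \<pi>" and pj: "p \<theta> j > 0"
   and h': "h' \<in> histories j N" "hist_prob p h' > 0"
  shows "traj f (f x (\<pi> [\<theta>]) \<theta>) (\<lambda>h'. if length h' < N then \<pi> (\<theta>#h') else u0) h' M = z"
proof -
  have len: "length h' = N" "h' \<noteq> []" "hd h' = j" using h'(1) by (auto simp: histories_def)
  define h where "h = take N (\<theta>#h')"
  have "hist_prob p (\<theta>#h') > 0" using len pj h'(2) by (simp add: hp_Cons)
  hence hP: "hist_prob p h > 0" unfolding h_def by (rule hp_take_pos[OF sm])
  have hH: "h \<in> histories \<theta> N" unfolding h_def histories_def using len NM by auto
  have "traj f x \<pi> h N = z" using feas hH hP z by (auto simp: empc_feasible_def)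
  moreover have "traj f x \<pi> h N = traj f x \<pi> (\<theta>#h') (Suc M)" unfolding h_def NM by (rule traj_take) simp
  moreover have "traj f (f x (\<pi> [\<theta>]) \<theta>) (\<lambda>h'. if length h' < N then \<pi> (\<theta>#h') else u0) h' M
       = traj f x \<pi> (\<theta>#h') (Suc M)" by (rule traj_shift) (simp add: NM)
  ultimately show ?thesis by simp
qed

lemma shift_feasible:
  assumes sm: "stochastic_matrix p" and z: "\<And>\<theta>. xs \<theta> = z" "\<And>\<theta>. (z,u0) \<in> Y \<theta>" "\<And>\<theta>. f z u0 \<theta> = z"
   and NM: "N = Suc M" and feas: "empc_feasible p f Y xs bet N x \<theta> \<pi>" and pj: "p \<theta> j > 0"
  shows "empc_feasible p f Y xs bet N (f x (\<pi> [\<theta>]) \<theta>) j (\<lambda>h'. if length h' < N then \<pi> (\<theta>#h') else u0)"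
  unfolding empc_feasible_def
proof (intro ballI impI conjI allI)
  fix h' assume h'H: "h' \<in> histories j N" and h'P: "hist_prob p h' > 0"
  define \<pi>' where "\<pi>' = (\<lambda>h'. if length h' < N then \<pi> (\<theta>#h') else u0)"
  define x1 where "x1 = f x (\<pi> [\<theta>]) \<theta>"
  have len: "length h' = N" "h' \<noteq> []" "hd h' = j" using h'H by (auto simp: histories_def)
  define h where "h = take N (\<theta>#h')"
  have "hist_prob p (\<theta>#h') > 0" using len pj h'P by (simp add: hp_Cons)
  hence hP: "hist_prob p h > 0" unfolding h_def by (rule hp_take_pos[OF sm])
  have hH: "h \<in> histories \<theta> N" unfolding h_def histories_def using len NM by auto
  have F1: "\<And>k. k < N \<Longrightarrow> (traj f x \<pi> h k, \<pi> (take (Suc k) h)) \<in> Y (h!k)"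
    using feas hH hP by (auto simp: empc_feasible_def)
  have tM: "traj f x1 \<pi>' h' M = z" unfolding x1_def \<pi>'_def
    by (rule shift_last[OF sm z(1) NM feas pj h'H h'P])
  have pM: "\<pi>' (take (Suc M) h') = u0" unfolding \<pi>'_def using len NM by simp
  fix k assume k: "k < N"
  show "(traj f x1 \<pi>' h' k, \<pi>' (take (Suc k) h')) \<in> Y (h' ! k)"
  proof (cases "k < M")
    case True
    have "traj f x1 \<pi>' h' k = traj f x \<pi> (\<theta>#h') (Suc k)" unfolding x1_def \<pi>'_def
      by (rule traj_shift) (simp add: k)
    also have "\<dots> = traj f x \<pi> h (Suc k)" unfolding h_def using True NM by (intro traj_take[symmetric]) simp
    finally have e1: "traj f x1 \<pi>' h' k = traj f x \<pi> h (Suc k)" .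
    have e2: "\<pi>' (take (Suc k) h') = \<pi> (take (Suc (Suc k)) h)" unfolding \<pi>'_def h_def
      using True NM by (auto simp: min_def)
    have e3: "h' ! k = h ! Suc k" unfolding h_def using True NM by simp
    show ?thesis using F1[of "Suc k"] True NM e1 e2 e3 by simp
  next
    case False
    hence "k = M" using k NM by simp
    thus ?thesis using tM pM z(2) by simp
  qed
next
  fix h' assume h'H: "h' \<in> histories j N" and h'P: "hist_prob p h' > 0"
  have len: "length h' = N" using h'H by (auto simp: histories_def)
  have tM: "traj f (f x (\<pi> [\<theta>]) \<theta>) (\<lambda>h'. if length h' < N then \<pi> (\<theta>#h') else u0) h' M = z"
    by (rule shift_last[OF sm z(1) NM feas pj h'H h'P])
  show "traj f (f x (\<pi> [\<theta>]) \<theta>) (\<lambda>h'. if length h' < N then \<pi> (\<theta>#h') else u0) h' N = xs (bet (h' ! (N - 1)))"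
    using tM len NM z by simp
qed

lemma cost_split:
  assumes sm: "stochastic_matrix p" and NM: "N = Suc M"
  shows "empc_cost p f l N x \<theta> \<pi> = l x (\<pi> [\<theta>]) \<theta> + (\<Sum>h\<in>histories \<theta> N. hist_prob p h * Acost f l x \<pi> M h)"
proof -
  have "empc_cost p f l N x \<theta> \<pi> = (\<Sum>h\<in>histories \<theta> N. hist_prob p h * (l x (\<pi> [\<theta>]) \<theta> + Acost f l x \<pi> M h))"
    unfolding empc_cost_def
  proof (intro sum.cong refl arg_cong[where f="\<lambda>z. _ * z"])
    fix h assume "h \<in> histories \<theta> N"
    then obtain t where h: "h = \<theta> # t" using NM by (cases h) (auto simp: histories_def)
    show "(\<Sum>k<N. l (traj f x \<pi> h k) (\<pi> (take (Suc k) h)) (h ! k)) = l x (\<pi> [\<theta>]) \<theta> + Acost f l x \<pi> M h"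
      unfolding NM Acost_def by (subst sum.lessThan_Suc_shift) (simp add: h)
  qed
  also have "\<dots> = (\<Sum>h\<in>histories \<theta> N. hist_prob p h) * l x (\<pi> [\<theta>]) \<theta> + (\<Sum>h\<in>histories \<theta> N. hist_prob p h * Acost f l x \<pi> M h)"
    by (simp add: distrib_left sum.distrib sum_distrib_right)
  also have "\<dots> = l x (\<pi> [\<theta>]) \<theta> + (\<Sum>h\<in>histories \<theta> N. hist_prob p h * Acost f l x \<pi> M h)"
    using sum_hp[OF sm] NM by simp
  finally show ?thesis .
qed

lemma cost_shift:
  assumes sm: "stochastic_matrix p" and z: "\<And>\<theta>. xs \<theta> = z" and ls: "\<And>\<theta>. l z u0 \<theta> = ls"
   and NM: "N = Suc M" and feas: "empc_feasible p f Y xs bet N x \<theta> \<pi>" and pj: "p \<theta> j > 0"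
  shows "empc_cost p f l N (f x (\<pi> [\<theta>]) \<theta>) j (\<lambda>h'. if length h' < N then \<pi> (\<theta>#h') else u0)
        = (\<Sum>h'\<in>histories j N. hist_prob p h' * Acost f l x \<pi> M (\<theta>#h')) + ls"
proof -
  define \<pi>' where "\<pi>' = (\<lambda>h'. if length h' < N then \<pi> (\<theta>#h') else u0)"
  define x1 where "x1 = f x (\<pi> [\<theta>]) \<theta>"
  have "empc_cost p f l N x1 j \<pi>' = (\<Sum>h'\<in>histories j N. hist_prob p h' * (Acost f l x \<pi> M (\<theta>#h') + ls))"
    unfolding empc_cost_def
  proof (intro sum.cong refl)
    fix h' assume h'H: "h' \<in> histories j N"
    have len: "length h' = N" using h'H by (auto simp: histories_def)
    show "hist_prob p h' * (\<Sum>k<N. l (traj f x1 \<pi>' h' k) (\<pi>' (take (Suc k) h')) (h' ! k))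
        = hist_prob p h' * (Acost f l x \<pi> M (\<theta>#h') + ls)"
    proof (cases "hist_prob p h' = 0")
      case False
      hence h'P: "hist_prob p h' > 0" using hp_nonneg[OF sm, of h'] by simp
      have tM: "traj f x1 \<pi>' h' M = z" unfolding x1_def \<pi>'_def
        by (rule shift_last[OF sm z NM feas pj h'H h'P])
      have pM: "\<pi>' (take (Suc M) h') = u0" unfolding \<pi>'_def using len NM by simp
      have A: "(\<Sum>k<M. l (traj f x1 \<pi>' h' k) (\<pi>' (take (Suc k) h')) (h' ! k)) = Acost f l x \<pi> M (\<theta>#h')"
        unfolding Acost_def
      proof (intro sum.cong refl)
        fix k assume "k \<in> {..<M}"
        hence k: "k < M" by simp
        have "traj f x1 \<pi>' h' k = traj f x \<pi> (\<theta>#h') (Suc k)" unfolding x1_def \<pi>'_def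
          by (rule traj_shift) (use k NM in linarith)
        moreover have "\<pi>' (take (Suc k) h') = \<pi> (take (Suc (Suc k)) (\<theta>#h'))" unfolding \<pi>'_def
          using k NM by auto
        ultimately show "l (traj f x1 \<pi>' h' k) (\<pi>' (take (Suc k) h')) (h' ! k)
           = l (traj f x \<pi> (\<theta> # h') (Suc k)) (\<pi> (take (Suc (Suc k)) (\<theta> # h'))) ((\<theta> # h') ! Suc k)" by simp
      qed
      have S: "(\<Sum>k<N. l (traj f x1 \<pi>' h' k) (\<pi>' (take (Suc k) h')) (h' ! k))
         = (\<Sum>k<M. l (traj f x1 \<pi>' h' k) (\<pi>' (take (Suc k) h')) (h' ! k))
           + l (traj f x1 \<pi>' h' M) (\<pi>' (take (Suc M) h')) (h' ! M)"
        unfolding NM by (rule sum.lessThan_Suc)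
      show ?thesis using S A tM pM ls by simp
    qed simp
  qed
  also have "\<dots> = (\<Sum>h'\<in>histories j N. hist_prob p h' * Acost f l x \<pi> M (\<theta>#h')) + (\<Sum>h'\<in>histories j N. hist_prob p h') * ls"
    by (simp add: distrib_left sum.distrib sum_distrib_right)
  also have "\<dots> = (\<Sum>h'\<in>histories j N. hist_prob p h' * Acost f l x \<pi> M (\<theta>#h')) + ls"
    using sum_hp[OF sm] NM by simp
  finally show ?thesis unfolding x1_def \<pi>'_def .
qed

lemma comb:
  assumes sm: "stochastic_matrix p" and NM: "N = Suc M"
  shows "(\<Sum>j\<in>UNIV. p \<theta> j * (\<Sum>h'\<in>histories j N. hist_prob p h' * Acost f l x \<pi> M (\<theta>#h')))
       = (\<Sum>h\<in>histories \<theta> N. hist_prob p h * Acost f l x \<pi> M h)"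
proof -
  have "(\<Sum>j\<in>UNIV. p \<theta> j * (\<Sum>h'\<in>histories j N. hist_prob p h' * Acost f l x \<pi> M (\<theta>#h')))
      = (\<Sum>h\<in>histories \<theta> (Suc (Suc M)). hist_prob p h * Acost f l x \<pi> M h)"
    unfolding NM by (rule sum_hist_SS_hp[symmetric])
  also have "\<dots> = (\<Sum>h\<in>histories \<theta> (Suc (Suc M)). hist_prob p h * Acost f l x \<pi> M (take (Suc M) h))"
    by (simp add: Acost_take)
  also have "\<dots> = (\<Sum>h\<in>histories \<theta> (Suc M). hist_prob p h * Acost f l x \<pi> M h)"
    by (rule marg[OF sm])
  finally show ?thesis unfolding NM .
qed


lemma lsc_compact_bdd:
  fixes g :: "'a::topological_space \<Rightarrow> real"
  assumes K: "compact K" and g: "lsc g"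
  shows "\<exists>b. \<forall>x\<in>K. b \<le> g x"
proof -
  have "\<forall>x. \<exists>S. open S \<and> x \<in> S \<and> (\<forall>y\<in>S. g x - 1 < g y)"
  proof
    fix x
    have "eventually (\<lambda>y. g x - 1 < g y) (nhds x)" using g unfolding lsc_def by simp
    thus "\<exists>S. open S \<and> x \<in> S \<and> (\<forall>y\<in>S. g x - 1 < g y)" unfolding eventually_nhds by blast
  qed
  then obtain U where U: "\<And>x. open (U x)" "\<And>x. x \<in> U x" "\<And>x y. y \<in> U x \<Longrightarrow> g x - 1 < g y"
    by metis
  have "K \<subseteq> (\<Union>c\<in>K. U c)" using U(2) by blast
  then obtain C' where C': "C' \<subseteq> K" "finite C'" "K \<subseteq> (\<Union>c\<in>C'. U c)"
    using compactE_image[OF K, of K U] U(1) by metis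
  define b where "b = - (\<Sum>c\<in>C'. \<bar>g c\<bar> + 1)"
  have "\<forall>y\<in>K. b \<le> g y"
  proof
    fix y assume "y \<in> K"
    then obtain c where c: "c \<in> C'" "y \<in> U c" using C'(3) by blast
    have "\<bar>g c\<bar> + 1 \<le> (\<Sum>c\<in>C'. \<bar>g c\<bar> + 1)"
      by (rule member_le_sum) (use c C' in auto)
    moreover have "g c - 1 < g y" using U(3) c by blast
    ultimately show "b \<le> g y" unfolding b_def by linarith
  qed
  thus ?thesis by blast
qed

theorem theorem2:
  fixes p :: "'q::finite \<Rightarrow> 'q \<Rightarrow> real"
    and f :: "(real^'n) \<Rightarrow> (real^'m) \<Rightarrow> 'q \<Rightarrow> (real^'n)"
    and l :: "(real^'n) \<Rightarrow> (real^'m) \<Rightarrow> 'q \<Rightarrow> real"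
    and Y :: "'q \<Rightarrow> ((real^'n) \<times> (real^'m)) set"
    and xs :: "'q \<Rightarrow> (real^'n)" and us :: "'q \<Rightarrow> (real^'m)"
    and bet :: "'q \<Rightarrow> 'q"
    and ls lams \<gamma> :: real
    and lam \<rho> :: "(real^'n) \<Rightarrow> 'q \<Rightarrow> real"
    and N :: nat
    and \<kappa> :: "(real^'n) \<Rightarrow> 'q \<Rightarrow> (real^'m)"
    and x0 :: "(real^'n)" and \<theta>0 :: 'q
  assumes chain: "stochastic_matrix p" "irreducible_chain p" "aperiodic_chain p"
    and bet: "is_bet p bet"
    (* well-posedness *)
    and l_nonneg: "\<And>x u \<theta>. 0 \<le> l x u \<theta>"
    and l_lsc: "\<And>\<theta>. lsc (\<lambda>(x, u). l x u \<theta>)"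
    and l_lb: "\<And>\<theta>. level_bounded_loc_unif (\<lambda>x u. l x u \<theta>)"
    and f_cont: "\<And>\<theta>. continuous_on UNIV (\<lambda>(x, u). f x u \<theta>)"
    and Y_ne: "\<And>\<theta>. Y \<theta> \<noteq> {}" and Y_compact: "\<And>\<theta>. compact (Y \<theta>)"
    (* optimal steady states, with a common optimal equilibrium (0,0) of cost ls *)
    and oss: "\<And>\<theta>. opt_steady_state f l Y \<theta> (xs \<theta>) (us \<theta>)"
    and common: "\<And>\<theta>. xs \<theta> = 0" "\<And>\<theta>. us \<theta> = 0"
    and l_s: "\<And>\<theta>. l 0 0 \<theta> = ls"
    (* controllability *)
    and ctrl: "\<And>i j. \<exists>u. (xs i, u) \<in> Y j \<and> f (xs i) u j = xs (bet j)"
    (* strict stochastic dissipativity *)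
    and lam_lsc: "\<And>\<theta>. lsc (\<lambda>x. lam x \<theta>)"
    and lam_s: "\<And>\<theta>. lam (xs \<theta>) \<theta> = lams"
    and rho_nonneg: "\<And>x \<theta>. 0 \<le> \<rho> x \<theta>"
    and rho_convex: "\<And>\<theta>. convex_on UNIV (\<lambda>x. \<rho> x \<theta>)"
    and rho_pd: "\<And>\<theta>. \<rho> (xs \<theta>) \<theta> = 0" "\<And>x \<theta>. x \<noteq> xs \<theta> \<Longrightarrow> 0 < \<rho> x \<theta>"
    and diss: "\<And>x u \<theta>. (\<Sum>j\<in>UNIV. p \<theta> j * lam (f x u \<theta>) j) - lam x \<theta>
                         \<le> l x u \<theta> - ls - \<rho> x \<theta>"
    (* quadratic lower bound on \<rho> *)
    and gamma: "\<gamma> > 0" "\<And>x i. \<rho> x i \<ge> \<gamma> * (norm (x - xs i))\<^sup>2"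
    (* EMPC horizon and feedback: \<kappa>_N is the first element of an optimal policy *)
    and N: "N \<ge> 1"
    and kappa: "\<And>x \<theta>. (x, \<theta>) \<in> empc_domain p f Y xs bet N \<Longrightarrow>
                  \<exists>\<pi>. empc_optimal p f l Y xs bet N x \<theta> \<pi> \<and> \<pi> [\<theta>] = \<kappa> x \<theta>"
    and init: "(x0, \<theta>0) \<in> empc_domain p f Y xs bet N"
  shows "cl_mean_square p f \<kappa> x0 \<theta>0 \<longlonglongrightarrow> 0"
proof -
  have sm: "stochastic_matrix p" using chain(1) .
  have pnn: "\<And>i j. 0 \<le> p i j" using sm by (simp add: stochastic_matrix_def)
  have f0: "\<And>\<theta>. f 0 0 \<theta> = 0" and Y0: "\<And>\<theta>. (0,0) \<in> Y \<theta>"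
    using oss common by (auto simp: opt_steady_state_def)
  have xs0: "\<And>\<theta>. xs \<theta> = 0" using common(1) .
  obtain M where NM: "N = Suc M" using N by (cases N) auto
  define D where "D = empc_domain p f Y xs bet N"
  define \<pi>o where "\<pi>o x \<theta> = (SOME \<pi>. empc_optimal p f l Y xs bet N x \<theta> \<pi> \<and> \<pi> [\<theta>] = \<kappa> x \<theta>)" for x \<theta>
  have \<pi>o: "empc_optimal p f l Y xs bet N x \<theta> (\<pi>o x \<theta>) \<and> \<pi>o x \<theta> [\<theta>] = \<kappa> x \<theta>" if "(x,\<theta>) \<in> D" for x \<theta>
    unfolding \<pi>o_def using kappa[OF that[unfolded D_def]] by (rule someI_ex)
  define V where "V x \<theta> = empc_cost p f l N x \<theta> (\<pi>o x \<theta>)" for x \<theta>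
  define sh where "sh x \<theta> = (\<lambda>h'. if length h' < N then \<pi>o x \<theta> (\<theta>#h') else (0::real^'m))" for x \<theta>
  have shF: "empc_feasible p f Y xs bet N (f x (\<kappa> x \<theta>) \<theta>) j (sh x \<theta>)"
    if "(x,\<theta>) \<in> D" "p \<theta> j > 0" for x \<theta> j
  proof -
    have feas: "empc_feasible p f Y xs bet N x \<theta> (\<pi>o x \<theta>)" using \<pi>o[OF that(1)] by (simp add: empc_optimal_def)
    have "empc_feasible p f Y xs bet N (f x (\<pi>o x \<theta> [\<theta>]) \<theta>) j (sh x \<theta>)"
      unfolding sh_def by (rule shift_feasible[OF sm xs0 Y0 f0 NM feas that(2)])
    thus ?thesis using \<pi>o[OF that(1)] by simp
  qed
  have inv: "(f x (\<kappa> x \<theta>) \<theta>, j) \<in> D" if "(x,\<theta>) \<in> D" "p \<theta> j > 0" for x \<theta> j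
    using shF[OF that] unfolding D_def empc_domain_def by blast
  have dec: "(\<Sum>j\<in>UNIV. p \<theta> j * V (f x (\<kappa> x \<theta>) \<theta>) j) \<le> V x \<theta> - l x (\<kappa> x \<theta>) \<theta> + ls"
    if xD: "(x,\<theta>) \<in> D" for x \<theta>
  proof -
    define \<pi> where "\<pi> = \<pi>o x \<theta>"
    have feas: "empc_feasible p f Y xs bet N x \<theta> \<pi>" using \<pi>o[OF xD] by (simp add: empc_optimal_def \<pi>_def)
    have k: "\<pi> [\<theta>] = \<kappa> x \<theta>" using \<pi>o[OF xD] by (simp add: \<pi>_def)
    define Q where "Q j = (\<Sum>h'\<in>histories j N. hist_prob p h' * Acost f l x \<pi> M (\<theta>#h'))" for j
    have "p \<theta> j * V (f x (\<kappa> x \<theta>) \<theta>) j \<le> p \<theta> j * (Q j + ls)" for j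
    proof (cases "p \<theta> j = 0")
      case False
      hence pj: "p \<theta> j > 0" using pnn[of \<theta> j] by simp
      have x1D: "(f x (\<kappa> x \<theta>) \<theta>, j) \<in> D" by (rule inv[OF xD pj])
      have "V (f x (\<kappa> x \<theta>) \<theta>) j \<le> empc_cost p f l N (f x (\<kappa> x \<theta>) \<theta>) j (sh x \<theta>)"
        using \<pi>o[OF x1D] shF[OF xD pj] unfolding V_def empc_optimal_def by blast
      also have "\<dots> = Q j + ls"
        using cost_shift[where z=0 and ?u0.0=0 and l=l and ls=ls and p=p and f=f and xs=xs, OF sm xs0 l_s NM feas pj] k
        unfolding Q_def sh_def \<pi>_def by (simp add: l_s)
      finally show ?thesis using pj by (simp add: mult_left_mono)
    qed simp
    hence "(\<Sum>j\<in>UNIV. p \<theta> j * V (f x (\<kappa> x \<theta>) \<theta>) j) \<le> (\<Sum>j\<in>UNIV. p \<theta> j * (Q j + ls))"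
      by (rule sum_mono)
    also have "\<dots> = (\<Sum>j\<in>UNIV. p \<theta> j * Q j) + ls * (\<Sum>j\<in>UNIV. p \<theta> j)"
      by (simp add: distrib_left sum.distrib sum_distrib_left mult.commute)
    also have "\<dots> = (\<Sum>h\<in>histories \<theta> N. hist_prob p h * Acost f l x \<pi> M h) + ls"
      using comb[OF sm NM] sm unfolding Q_def stochastic_matrix_def by simp
    also have "\<dots> = V x \<theta> - l x (\<kappa> x \<theta>) \<theta> + ls"
      using cost_split[OF sm NM, of f l x \<theta> \<pi>] k unfolding V_def \<pi>_def by simp
    finally show ?thesis .
  qed
  have Vnn: "0 \<le> V x \<theta>" for x \<theta>
    unfolding V_def empc_cost_def
    by (intro sum_nonneg mult_nonneg_nonneg hp_nonneg[OF sm] l_nonneg)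
  have inY: "x \<in> fst ` Y \<theta>" if xD: "(x,\<theta>) \<in> D" for x \<theta>
  proof -
    obtain \<pi> where feas: "empc_feasible p f Y xs bet N x \<theta> \<pi>" using xD unfolding D_def empc_domain_def by blast
    define hb where "hb = map (\<lambda>t. (bet ^^ t) \<theta>) [0..<N]"
    have hbH: "hb \<in> histories \<theta> N" unfolding hb_def histories_def using NM by (simp add: upt_conv_Cons del: upt_Suc)
    have pb: "p i (bet i) > 0" for i using bet unfolding is_bet_def cover_def by blast
    have "hist_prob p hb > 0" unfolding hp_pos_iff[OF sm]
    proof (intro allI impI)
      fix t assume "t < length hb - 1"
      hence "t < N" "Suc t < N" by (auto simp: hb_def)
      thus "0 < p (hb!t) (hb!Suc t)" unfolding hb_def using pb by simp
    qed
    hence "(traj f x \<pi> hb 0, \<pi> (take (Suc 0) hb)) \<in> Y (hb ! 0)"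
      using feas hbH NM unfolding empc_feasible_def by blast
    moreover have "hb ! 0 = \<theta>" unfolding hb_def using NM by (simp del: upt_Suc)
    ultimately have "(x, \<pi> (take (Suc 0) hb)) \<in> Y \<theta>" by simp
    thus ?thesis by force
  qed
  have "\<forall>\<theta>. \<exists>b. \<forall>x\<in>fst ` Y \<theta>. b \<le> lam x \<theta>"
  proof
    fix \<theta>
    have "compact (fst ` Y \<theta>)"
      by (rule compact_continuous_image[OF continuous_on_fst[OF continuous_on_id] Y_compact])
    thus "\<exists>b. \<forall>x\<in>fst ` Y \<theta>. b \<le> lam x \<theta>" by (rule lsc_compact_bdd[OF _ lam_lsc])
  qed
  then obtain bb where bb: "\<And>\<theta> x. x \<in> fst ` Y \<theta> \<Longrightarrow> bb \<theta> \<le> lam x \<theta>" by metis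
  define m where "m = - (\<Sum>\<theta>\<in>UNIV. \<bar>bb \<theta>\<bar>)"
  have mle: "m \<le> bb \<theta>" for \<theta>
  proof -
    have "\<bar>bb \<theta>\<bar> \<le> (\<Sum>\<theta>\<in>UNIV. \<bar>bb \<theta>\<bar>)" by (rule member_le_sum) auto
    thus ?thesis unfolding m_def by linarith
  qed
  define L where "L x \<theta> = V x \<theta> + lam x \<theta>" for x \<theta>
  have Lm: "m \<le> L x \<theta>" if "(x,\<theta>) \<in> D" for x \<theta>
    using Vnn[of x \<theta>] bb[OF inY[OF that]] mle[of \<theta>] unfolding L_def by linarith
  have key: "W p f \<kappa> (Suc 0) L x \<theta> \<le> L x \<theta> - \<rho> x \<theta>" if xD: "(x,\<theta>) \<in> D" for x \<theta>
  proof -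
    have "W p f \<kappa> (Suc 0) L x \<theta> = (\<Sum>j\<in>UNIV. p \<theta> j * V (f x (\<kappa> x \<theta>) \<theta>) j)
          + (\<Sum>j\<in>UNIV. p \<theta> j * lam (f x (\<kappa> x \<theta>) \<theta>) j)"
      by (simp add: L_def distrib_left sum.distrib)
    thus ?thesis using dec[OF xD] diss[where x=x and u="\<kappa> x \<theta>" and \<theta>=\<theta>] unfolding L_def by linarith
  qed
  have x0D: "(x0, \<theta>0) \<in> D" using init unfolding D_def .
  have step: "W p f \<kappa> k \<rho> x0 \<theta>0 \<le> W p f \<kappa> k L x0 \<theta>0 - W p f \<kappa> (Suc k) L x0 \<theta>0" for k
  proof -
    have "W p f \<kappa> (Suc k) L x0 \<theta>0 = W p f \<kappa> k (W p f \<kappa> (Suc 0) L) x0 \<theta>0" by (rule W_Suc')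
    also have "\<dots> \<le> W p f \<kappa> k (\<lambda>x \<theta>. L x \<theta> - \<rho> x \<theta>) x0 \<theta>0"
      by (rule W_mono[OF sm, where S=D]) (use inv key x0D in auto)
    also have "\<dots> = W p f \<kappa> k L x0 \<theta>0 - W p f \<kappa> k \<rho> x0 \<theta>0" by (rule W_diff)
    finally show ?thesis by simp
  qed
  have lowL: "m \<le> W p f \<kappa> k L x0 \<theta>0" for k
  proof -
    have "W p f \<kappa> k (\<lambda>_ _. m) x0 \<theta>0 \<le> W p f \<kappa> k L x0 \<theta>0"
      by (rule W_mono[OF sm, where S=D]) (use inv Lm x0D in auto)
    moreover have "W p f \<kappa> k (\<lambda>_ _. m) x0 \<theta>0 = m" by (rule W_const[OF sm])
    ultimately show ?thesis by linarith
  qed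
  define a where "a k = W p f \<kappa> k (\<lambda>x \<theta>. (norm x)\<^sup>2) x0 \<theta>0" for k
  have a_nn: "0 \<le> a k" for k
  proof -
    have "W p f \<kappa> k (\<lambda>_ _. 0) x0 \<theta>0 \<le> a k" unfolding a_def
      by (rule W_mono[OF sm, where S=UNIV]) auto
    moreover have "W p f \<kappa> k (\<lambda>_ _. 0) x0 \<theta>0 = (0::real)" by (rule W_const[OF sm])
    ultimately show ?thesis by linarith
  qed
  have a_le: "\<gamma> * a k \<le> W p f \<kappa> k \<rho> x0 \<theta>0" for k
  proof -
    have "W p f \<kappa> k (\<lambda>x \<theta>. \<gamma> * (norm x)\<^sup>2) x0 \<theta>0 \<le> W p f \<kappa> k \<rho> x0 \<theta>0"
      by (rule W_mono[OF sm, where S=UNIV]) (use gamma(2) xs0 in auto)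
    thus ?thesis unfolding a_def by (simp add: W_scale)
  qed
  have psum: "(\<Sum>k<K. a k) \<le> (L x0 \<theta>0 - m) / \<gamma>" for K
  proof -
    have "(\<Sum>k<K. \<gamma> * a k) \<le> (\<Sum>k<K. W p f \<kappa> k L x0 \<theta>0 - W p f \<kappa> (Suc k) L x0 \<theta>0)"
      by (intro sum_mono order_trans[OF a_le step])
    also have "\<dots> = W p f \<kappa> 0 L x0 \<theta>0 - W p f \<kappa> K L x0 \<theta>0"
      by (rule sum_lessThan_telescope')
    also have "\<dots> \<le> L x0 \<theta>0 - m" using lowL[of K] by simp
    finally have "\<gamma> * (\<Sum>k<K. a k) \<le> L x0 \<theta>0 - m" by (simp add: sum_distrib_left)
    thus ?thesis using gamma(1) by (simp add: pos_le_divide_eq mult.commute)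
  qed
  have "summable a" by (rule summableI_nonneg_bounded[OF a_nn psum])
  hence "a \<longlonglongrightarrow> 0" by (rule summable_LIMSEQ_zero)
  moreover have "cl_mean_square p f \<kappa> x0 \<theta>0 = a"
  proof
    fix k
    show "cl_mean_square p f \<kappa> x0 \<theta>0 k = a k"
      unfolding cl_mean_square_def a_def
      by (rule cl_W[where g="\<lambda>x \<theta>. (norm x)\<^sup>2"])
  qed
  ultimately show ?thesis by simp
qed

end
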